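(* Let $\eta\in(0,1)$. There exists a positive sequence $(\epsilon_j)_{j\ge1}$ converging to $0$ such that, with probability 1, for every $j$ large enough and every $W\in\Sigma_{\lfloor j(\eta-\epsilon_j)\rfloor}$, one has $\mathcal S_j(\eta,W)\neq\emptyset$.
   Context: Fix $d\ge1$. $\Sigma_j$ is the set of words of length $j$ over the alphabet $\{0,1\}^d$ and $\Sigma^*=\bigcup_{j\ge1}\Sigma_j$; for $w=w_1\cdots w_j\in\Sigma_j$ with $w_k=(w_k^{(1)},\dots,w_k^{(d)})$, $I_w=\prod_{i=1}^d[x_w^{(i)},x_w^{(i)}+2^{-j}]$ where $x_w^{(i)}=\sum_{k=1}^jw_k^{(i)}2^{-k}$. Let $(p_w)_{w\in\Sigma^*}$ be independent Bernoulli random variables with $\mathbb P(p_w=1)=2^{-d(1-\eta)|w|}$. Set $\mathcal S_j(\eta)=\{w\in\Sigma_j:p_w=1\}$ and, for $W\in\Sigma^*$, $\mathcal S_j(\eta,W)=\{w\in\mathcal S_j(\eta): I_w\subset I_W\}$. *)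

theory Defs
  imports "HOL-Probability.Probability"
begin

text \<open>Letters of the alphabet {0,1}^d are boolean lists of length d; words are lists of letters.\<close>
type_synonym word = "bool list list"

definition Sigma_len :: "nat \<Rightarrow> nat \<Rightarrow> word set" where
  "Sigma_len d j = {w. length w = j \<and> (\<forall>a\<in>set w. length a = d)}"

definition Sigma_star :: "nat \<Rightarrow> word set" where
  "Sigma_star d = (\<Union>j\<in>{1..}. Sigma_len d j)"

text \<open>x_w^(i) = sum_{k=1}^{|w|} w_k^(i) 2^(-k)  (list index k-1).\<close>
definition corner :: "word \<Rightarrow> nat \<Rightarrow> real" where
  "corner w i = (\<Sum>k<length w. (if w ! k ! i then 1 else 0) * (1/2) ^ (k + 1))"

text \<open>The dyadic cube I_w in R^d, points represented as functions nat => real vanishing at i >= d.\<close>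
definition cube :: "nat \<Rightarrow> word \<Rightarrow> (nat \<Rightarrow> real) set" where
  "cube d w = {x. \<forall>i. (i < d \<longrightarrow> corner w i \<le> x i \<and> x i \<le> corner w i + (1/2) ^ length w)
                      \<and> (d \<le> i \<longrightarrow> x i = 0)}"

definition keep_prob :: "nat \<Rightarrow> real \<Rightarrow> word \<Rightarrow> real" where
  "keep_prob d \<eta> w = 2 powr (- (real d * (1 - \<eta>) * real (length w)))"

definition coin_space :: "nat \<Rightarrow> real \<Rightarrow> (word \<Rightarrow> bool) measure" where
  "coin_space d \<eta> = PiM (Sigma_star d) (\<lambda>w. measure_pmf (bernoulli_pmf (keep_prob d \<eta> w)))"

definition S_set :: "nat \<Rightarrow> nat \<Rightarrow> (word \<Rightarrow> bool) \<Rightarrow> word set" where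
  "S_set d j \<omega> = {w \<in> Sigma_len d j. \<omega> w}"

definition S_in :: "nat \<Rightarrow> nat \<Rightarrow> word \<Rightarrow> (word \<Rightarrow> bool) \<Rightarrow> word set" where
  "S_in d j W \<omega> = {w \<in> S_set d j \<omega>. cube d w \<subseteq> cube d W}"

end

theory Submission imports Defs "HOL-Real_Asymp.Real_Asymp" begin

lemma Sigma_len_eq: "Sigma_len d k = {xs. set xs \<subseteq> {a. length a = d} \<and> length xs = k}"
  unfolding Sigma_len_def by auto

lemma card_len: "card {a::bool list. length a = d} = 2 ^ d"
  using card_lists_length_eq[of "UNIV :: bool set" d] by simp

lemma finite_len: "finite {a::bool list. length a = d}"
  using finite_lists_length_eq[of "UNIV :: bool set" d] by simp

lemma finite_Sigma_len: "finite (Sigma_len d k)"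
  unfolding Sigma_len_eq using finite_lists_length_eq[OF finite_len] by blast

lemma card_Sigma_len: "card (Sigma_len d k) = 2 ^ (d * k)"
  unfolding Sigma_len_eq card_lists_length_eq[OF finite_len] card_len by (simp add: power_mult)

lemma sum_split_add: "(\<Sum>k<m+n. f k) = (\<Sum>k<m. f k) + (\<Sum>k<n. f (m + k::nat))" for f :: "nat \<Rightarrow> real"
  by (induction n) (auto simp: add.assoc)

lemma corner_append:
  "corner (W @ v) i = corner W i + (1/2) ^ length W * corner v i"
proof -
  let ?f = "\<lambda>k. (if (W @ v) ! k ! i then 1 else 0) * (1/2::real) ^ (k + 1)"
  have "corner (W @ v) i = (\<Sum>k<length W + length v. ?f k)" unfolding corner_def by simp
  also have "\<dots> = (\<Sum>k<length W. ?f k) + (\<Sum>k<length v. ?f (length W + k))"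
    by (rule sum_split_add)
  also have "(\<Sum>k<length W. ?f k) = corner W i"
    unfolding corner_def by (intro sum.cong) (auto simp: nth_append)
  also have "(\<Sum>k<length v. ?f (length W + k)) = (1/2) ^ length W * corner v i"
    unfolding corner_def sum_distrib_left
    by (intro sum.cong) (auto simp: nth_append power_add)
  finally show ?thesis .
qed

lemma corner_nonneg: "0 \<le> corner v i"
  unfolding corner_def by (intro sum_nonneg) auto

lemma geom_half: "(\<Sum>k<n. (1/2::real) ^ (k + 1)) = 1 - (1/2) ^ n"
  by (induction n) auto

lemma corner_le: "corner v i \<le> 1 - (1/2) ^ length v"
proof -
  have "corner v i \<le> (\<Sum>k<length v. (1/2::real) ^ (k + 1))"
    unfolding corner_def by (intro sum_mono) auto
  also have "\<dots> = 1 - (1/2) ^ length v" by (rule geom_half)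
  finally show ?thesis .
qed

lemma cube_append: "cube d (W @ v) \<subseteq> cube d W"
proof
  fix x assume x: "x \<in> cube d (W @ v)"
  show "x \<in> cube d W" unfolding cube_def
  proof (intro CollectI allI conjI impI)
    fix i assume "i < d"
    with x have a: "corner (W @ v) i \<le> x i" "x i \<le> corner (W @ v) i + (1/2) ^ length (W @ v)"
      unfolding cube_def by auto
    have c: "corner (W @ v) i = corner W i + (1/2) ^ length W * corner v i" by (rule corner_append)
    have p: "(0::real) \<le> (1/2) ^ length W" by simp
    from mult_left_mono[OF corner_nonneg p] have "0 \<le> (1/2) ^ length W * corner v i" by simp
    with a c show "corner W i \<le> x i" by linarith
    from mult_left_mono[OF corner_le p]
    have "(1/2) ^ length W * corner v i \<le> (1/2) ^ length W * (1 - (1/2) ^ length v)" .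
    moreover have "(1/2::real) ^ length (W @ v) = (1/2) ^ length W * (1/2) ^ length v"
      by (simp add: power_add)
    ultimately show "x i \<le> corner W i + (1/2) ^ length W" using a c by (simp add: algebra_simps)
  next
    fix i assume "d \<le> i" with x show "x i = 0" unfolding cube_def by auto
  qed
qed

lemma eps_lim: "(\<lambda>j::nat. if j = 0 then 1 else 2 * log 2 (real j + 1) / real j) \<longlonglongrightarrow> 0"
proof -
  have "(\<lambda>j::nat. 2 * log 2 (real j + 1) / real j) \<longlonglongrightarrow> 0" by real_asymp
  then show ?thesis
    by (rule Lim_transform_eventually) (auto simp: eventually_sequentially intro!: exI[of _ 1])
qed

lemma sigma_app:
  assumes "W \<in> Sigma_len d a" "v \<in> Sigma_len d b"
  shows "W @ v \<in> Sigma_len d (a + b)"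
  using assms unfolding Sigma_len_def by auto

theorem lemma2:
  fixes d :: nat and \<eta> :: real
  assumes "1 \<le> d" and "0 < \<eta>" and "\<eta> < 1"
  shows "\<exists>\<epsilon> :: nat \<Rightarrow> real. (\<forall>j. 0 < \<epsilon> j) \<and> \<epsilon> \<longlonglongrightarrow> 0 \<and>
    (AE \<omega> in coin_space d \<eta>. eventually (\<lambda>j.
       \<forall>W \<in> Sigma_len d (nat \<lfloor>real j * (\<eta> - \<epsilon> j)\<rfloor>). S_in d j W \<omega> \<noteq> {}) sequentially)"
proof -
  define \<epsilon> where "\<epsilon> = (\<lambda>j::nat. if j = 0 then 1 else 2 * log 2 (real j + 1) / real j)"
  define m where "m j = nat \<lfloor>real j * (\<eta> - \<epsilon> j)\<rfloor>" for j
  define n where "n j = j - m j" for j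
  define I where "I = Sigma_star d"
  define Mi where "Mi = (\<lambda>w. measure_pmf (bernoulli_pmf (keep_prob d \<eta> w)))"
  define M where "M = coin_space d \<eta>"
  define p where "p j = 2 powr (- (real d * (1 - \<eta>) * real j))" for j :: nat
  define J where "J j W = (\<lambda>v. W @ v) ` Sigma_len d (n j)" for j W
  define E where "E j W = prod_emb I Mi (J j W) (PiE (J j W) (\<lambda>_. {False}))" for j W
  define A where "A j = (if j = 0 then {} else \<Union>W\<in>Sigma_len d (m j). E j W)" for j
  have M_eq: "M = PiM I Mi" unfolding M_def coin_space_def I_def Mi_def ..
  have eps_pos: "0 < \<epsilon> j" for j
    unfolding \<epsilon>_def by (auto intro!: divide_pos_pos)
  have eps_lim: "\<epsilon> \<longlonglongrightarrow> 0" unfolding \<epsilon>_def by (rule eps_lim)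
  have m_le: "m j \<le> j" for j
  proof -
    have "real j * (\<eta> - \<epsilon> j) \<le> real j * 1"
      using eps_pos[of j] assms by (intro mult_left_mono) auto
    then have "\<lfloor>real j * (\<eta> - \<epsilon> j)\<rfloor> \<le> int j" by linarith
    then show ?thesis unfolding m_def by linarith
  qed
  have mn: "m j + n j = j" for j using m_le[of j] unfolding n_def by simp
  have PS: "prob_space M" unfolding M_eq Mi_def
    by (rule prob_space_PiM) (rule prob_space_measure_pmf)
  interpret P: prob_space M by (rule PS)
  have J_sub: "J j W \<subseteq> Sigma_len d j" if "W \<in> Sigma_len d (m j)" for j W
    using sigma_app[OF that, of _ "n j"] mn[of j] unfolding J_def by auto
  have J_I: "J j W \<subseteq> I" if "W \<in> Sigma_len d (m j)" "j \<ge> 1" for j W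
    using J_sub[OF that(1)] that(2) unfolding I_def Sigma_star_def by auto
  have J_fin: "finite (J j W)" for j W unfolding J_def using finite_Sigma_len by simp
  have J_card: "card (J j W) = 2 ^ (d * n j)" for j W
    unfolding J_def by (subst card_image) (auto simp: inj_on_def card_Sigma_len)
  have E_sets: "E j W \<in> sets M" if "W \<in> Sigma_len d (m j)" "j \<ge> 1" for j W
    unfolding E_def M_eq by (rule sets_PiM_I) (use J_fin J_I[OF that] in \<open>auto simp: Mi_def\<close>)
  have A_sets: "A j \<in> sets M" for j
    unfolding A_def using E_sets finite_Sigma_len by (auto intro!: sets.finite_UN)
  have p01: "0 \<le> p j" "p j \<le> 1" for j
  proof -
    show "0 \<le> p j" unfolding p_def by simp
    have "0 \<le> real d * (1 - \<eta>) * real j" using assms by simp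
    then have "2 powr (- (real d * (1 - \<eta>) * real j)) \<le> 2 powr 0"
      by (intro powr_mono) auto
    then show "p j \<le> 1" unfolding p_def by simp
  qed
  have E_meas: "measure M (E j W) = (1 - p j) ^ (2 ^ (d * n j))" 
    if "W \<in> Sigma_len d (m j)" "j \<ge> 1" for j W
  proof -
    have "emeasure M (E j W) = (\<Prod>w\<in>J j W. emeasure (Mi w) {False})"
      unfolding E_def M_eq
      by (rule emeasure_PiM_emb) (use J_fin J_I[OF that] in \<open>auto simp: Mi_def prob_space_measure_pmf\<close>)
    also have "\<dots> = (\<Prod>w\<in>J j W. ennreal (1 - p j))"
    proof (rule prod.cong)
      fix w assume "w \<in> J j W"
      then have "length w = j" using J_sub[OF that(1)] unfolding Sigma_len_def by auto
      then have "keep_prob d \<eta> w = p j" unfolding keep_prob_def p_def by simp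
      then show "emeasure (Mi w) {False} = ennreal (1 - p j)"
        unfolding Mi_def using p01[of j] by (simp add: emeasure_pmf_single)
    qed simp
    also have "\<dots> = ennreal ((1 - p j) ^ (2 ^ (d * n j)))"
      using p01[of j] by (simp add: J_card ennreal_power)
    finally show ?thesis unfolding measure_def using p01[of j] by simp
  qed
  have A_meas: "measure M (A j) \<le> 2 ^ (d * j) * (1 - p j) ^ (2 ^ (d * n j))" if "j \<ge> 1" for j
  proof -
    have "measure M (A j) \<le> (\<Sum>W\<in>Sigma_len d (m j). measure M (E j W))"
      unfolding A_def using that finite_Sigma_len E_sets by (auto intro!: measure_UNION_le)
    also have "\<dots> = (\<Sum>W\<in>Sigma_len d (m j). (1 - p j) ^ (2 ^ (d * n j)))"
      using E_meas that by (intro sum.cong) auto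
    also have "\<dots> = 2 ^ (d * m j) * (1 - p j) ^ (2 ^ (d * n j))"
      by (simp add: card_Sigma_len)
    also have "\<dots> \<le> 2 ^ (d * j) * (1 - p j) ^ (2 ^ (d * n j))"
      using p01[of j] m_le[of j] by (intro mult_right_mono power_increasing) auto
    finally show ?thesis .
  qed
  obtain N0 where N0: "\<And>j. j \<ge> N0 \<Longrightarrow> \<epsilon> j < \<eta>"
    using order_tendstoD(2)[OF eps_lim assms(2)] unfolding eventually_sequentially by blast
  have bound: "measure M (A j) \<le> exp (- 1) ^ j" if j: "j \<ge> max N0 (max 1 d)" for j
  proof -
    have j1: "j \<ge> 1" and jd: "j \<ge> d" and je: "\<epsilon> j < \<eta>" using j N0 by auto
    define N where "N = (2::real) ^ (d * n j)"
    have "(1 - p j) ^ (2 ^ (d * n j)) \<le> exp (- p j) ^ (2 ^ (d * n j))"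
      using p01[of j] exp_ge_add_one_self[of "- p j"] by (intro power_mono) auto
    also have "\<dots> = exp (- p j * N)"
      unfolding N_def exp_of_nat_mult[symmetric] by (simp add: algebra_simps)
    also have "\<dots> \<le> exp (- ((real j + 1) ^ 2))"
    proof -
      have x0: "0 \<le> real j * (\<eta> - \<epsilon> j)" using je by simp
      have mle: "real (m j) \<le> real j * (\<eta> - \<epsilon> j)"
        unfolding m_def using x0 by linarith
      have jeps: "real j * \<epsilon> j = 2 * log 2 (real j + 1)" unfolding \<epsilon>_def using j1 by simp
      have nj: "real (n j) = real j - real (m j)" unfolding n_def using m_le[of j] by simp
      have "real j * \<epsilon> j \<le> \<eta> * real j - real (m j)" using mle by (simp add: algebra_simps)
      moreover have "0 \<le> real j * \<epsilon> j" using eps_pos[of j] by simp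
      ultimately have "real j * \<epsilon> j \<le> real d * (\<eta> * real j - real (m j))"
      proof -
        assume h1: "real j * \<epsilon> j \<le> \<eta> * real j - real (m j)" and h2: "0 \<le> real j * \<epsilon> j"
        have "1 * (real j * \<epsilon> j) \<le> real d * (real j * \<epsilon> j)"
          using assms(1) h2 by (intro mult_right_mono) auto
        also have "\<dots> \<le> real d * (\<eta> * real j - real (m j))"
          using h1 by (intro mult_left_mono) auto
        finally show ?thesis by simp
      qed
      also have "\<dots> = real d * real (n j) - real d * (1 - \<eta>) * real j"
        unfolding nj by (simp add: algebra_simps)
      finally have ex: "2 * log 2 (real j + 1) \<le> real d * real (n j) - real d * (1 - \<eta>) * real j"
        using jeps by simp
      have "(real j + 1) ^ 2 = 2 powr (log 2 (real j + 1) + log 2 (real j + 1))"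
        by (simp only: powr_add powr_log_cancel) (auto simp: power2_eq_square)
      also have "\<dots> \<le> 2 powr (real d * real (n j) - real d * (1 - \<eta>) * real j)"
        using ex by (intro powr_mono) auto
      also have "\<dots> = 2 powr (- (real d * (1 - \<eta>) * real j) + real (d * n j))"
        by (simp add: algebra_simps)
      also have "\<dots> = 2 powr (- (real d * (1 - \<eta>) * real j)) * 2 powr (real (d * n j))"
        by (rule powr_add)
      also have "\<dots> = p j * N"
        unfolding p_def N_def by (subst powr_realpow) auto
      finally show ?thesis by simp
    qed
    finally have b1: "(1 - p j) ^ (2 ^ (d * n j)) \<le> exp (- ((real j + 1) ^ 2))" .
    have "(2::real) ^ (d * j) \<le> exp 1 ^ (d * j)"
      using exp_ge_add_one_self[of 1] by (intro power_mono) auto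
    also have "\<dots> = exp (real d * real j)" unfolding exp_of_nat_mult[symmetric] by simp
    finally have b2: "(2::real) ^ (d * j) \<le> exp (real d * real j)" .
    have "measure M (A j) \<le> 2 ^ (d * j) * (1 - p j) ^ (2 ^ (d * n j))" by (rule A_meas[OF j1])
    also have "\<dots> \<le> exp (real d * real j) * exp (- ((real j + 1) ^ 2))"
      using b1 b2 p01[of j] by (intro mult_mono) auto
    also have "\<dots> = exp (real d * real j - (real j + 1) ^ 2)" by (simp add: exp_add[symmetric])
    also have "\<dots> \<le> exp (- real j)"
    proof -
      have "real d * real j \<le> real j * real j" using jd by (intro mult_right_mono) auto
      then show ?thesis by (simp add: power2_eq_square algebra_simps)
    qed
    also have "\<dots> = exp (- 1) ^ j" unfolding exp_of_nat_mult[symmetric] by simp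
    finally show ?thesis .
  qed
  have summ: "summable (\<lambda>j. measure M (A j))"
  proof (rule summable_comparison_test'[OF summable_geometric[of "exp (- 1)"], where N="max N0 (max 1 d)"])
    show "norm (exp (- 1::real)) < 1" by simp
    fix j assume "max N0 (max 1 d) \<le> j"
    then show "norm (measure M (A j)) \<le> exp (- 1) ^ j" using bound[of j] by simp
  qed
  have AE: "AE \<omega> in M. eventually (\<lambda>j. \<omega> \<in> space M - A j) sequentially"
    by (rule borel_cantelli_AE1[OF A_sets _ summ]) (simp add: less_top[symmetric])
  show ?thesis
  proof (intro exI[of _ \<epsilon>] conjI allI eps_pos eps_lim)
    show "AE \<omega> in coin_space d \<eta>. eventually (\<lambda>j.
       \<forall>W \<in> Sigma_len d (nat \<lfloor>real j * (\<eta> - \<epsilon> j)\<rfloor>). S_in d j W \<omega> \<noteq> {}) sequentially"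
      unfolding M_def[symmetric] m_def[symmetric]
    proof (rule AE_mp[OF AE], intro AE_I2 impI)
      fix \<omega> assume "\<omega> \<in> space M" and ev: "eventually (\<lambda>j. \<omega> \<in> space M - A j) sequentially"
      show "eventually (\<lambda>j. \<forall>W \<in> Sigma_len d (m j). S_in d j W \<omega> \<noteq> {}) sequentially"
        using ev eventually_ge_at_top[of 1]
      proof eventually_elim
        case (elim j)
        show ?case
        proof
          fix W assume W: "W \<in> Sigma_len d (m j)"
          have "\<omega> \<notin> E j W" using elim W unfolding A_def by auto
          then have "restrict \<omega> (J j W) \<notin> PiE (J j W) (\<lambda>_. {False})"
            using elim(1) unfolding E_def prod_emb_iff M_eq space_PiM by (auto simp: Mi_def PiE_def)
          then have "\<not> (\<forall>w\<in>J j W. \<omega> w \<in> {False})" using restrict_PiE_iff[of \<omega> "J j W" "\<lambda>_. {False}"] by blast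
          then obtain w where w: "w \<in> J j W" "\<omega> w" by auto
          then obtain v where v: "w = W @ v" unfolding J_def by auto
          have "w \<in> S_in d j W \<omega>"
            using w J_sub[OF W] cube_append[of d W v] v unfolding S_in_def S_set_def by auto
          then show "S_in d j W \<omega> \<noteq> {}" by auto
        qed
      qed
    qed
  qed
qed

end
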